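(* Let $p$ and $s$ be distinct odd primes, $g$ a primitive root modulo $p$, $\zeta$ a primitive $p$-th root of unity in $\overline{\mathbb{F}}_s$, and $G(p)=\langle a,b\mid a^p=1=b^{(p-1)/2},\ b^{-1}ab=a^{g^2}\rangle$. Let $\rho:\langle a\rangle\to\overline{\mathbb{F}}_s^*$ be given by $\rho(a)=\zeta$ and let $\rho^{G(p)}$ be the induced representation. Then $\rho^{G(p)}$ is realizable over $\mathbb{F}_s$ if and only if $\left(\frac{p^*}{s}\right)=1$, where $p^*=(-1)^{(p-1)/2}p$.
   Context: $\left(\frac{\cdot}{s}\right)$ is the Legendre symbol. A representation over $\overline{\mathbb{F}}_s$ is realizable over $\mathbb{F}_s$ if it is equivalent (over $\overline{\mathbb{F}}_s$) to a matrix representation with all matrix entries in $\mathbb{F}_s$. Concretely, with $n=(p-1)/2$, $\rho^{G(p)}$ acts on a space with basis $e_0,\dots,e_{n-1}$ by $ae_i=\zeta^{g^{2i}}e_i$, $be_i=e_{i+1}$ (indices modulo $n$). *)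

theory Defs
  imports "HOL-Number_Theory.Number_Theory" "HOL-Computational_Algebra.Polynomial"
    "Jordan_Normal_Form.Matrix"
begin

definition in_prime_field :: "'k :: field \<Rightarrow> bool" where
  "in_prime_field x \<longleftrightarrow> (\<exists>m::nat. x = of_nat m)"

(* 'k is (a model of) the algebraic closure of F_s: algebraically closed, characteristic s,
   and every element is algebraic over F_s, i.e. lies in some finite field F_{s^e}. *)
definition is_alg_closure_of_Fp :: "'k :: alg_closed_field itself \<Rightarrow> nat \<Rightarrow> bool" where
  "is_alg_closure_of_Fp TYPE('k) s \<longleftrightarrow>
     CHAR('k) = s \<and> (\<forall>x::'k. \<exists>e>0. x ^ (s ^ e) = x)"

definition prim_root_of_unity :: "nat \<Rightarrow> 'k :: field \<Rightarrow> bool" where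
  "prim_root_of_unity p z \<longleftrightarrow> z ^ p = 1 \<and> (\<forall>k. 0 < k \<and> k < p \<longrightarrow> z ^ k \<noteq> 1)"

(* Matrices of the induced representation rho^{G(p)} on the generators a, b,
   w.r.t. basis e_0..e_{n-1}, n = (p-1)/2:  a e_i = zeta^(g^(2i)) e_i,  b e_i = e_{i+1 mod n}.
   Column j of the matrix is the image of e_j. *)
definition ind_rep_a :: "nat \<Rightarrow> nat \<Rightarrow> 'k :: field \<Rightarrow> 'k mat" where
  "ind_rep_a p g z = mat ((p - 1) div 2) ((p - 1) div 2)
     (\<lambda>(i, j). if i = j then z ^ (g ^ (2 * i)) else 0)"

definition ind_rep_b :: "nat \<Rightarrow> 'k :: field mat" where
  "ind_rep_b p = mat ((p - 1) div 2) ((p - 1) div 2)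
     (\<lambda>(i, j). if i = (j + 1) mod ((p - 1) div 2) then 1 else 0)"

definition mat_over_prime_field :: "'k :: field mat \<Rightarrow> bool" where
  "mat_over_prime_field M \<longleftrightarrow>
     (\<forall>i < dim_row M. \<forall>j < dim_col M. in_prime_field (M $$ (i, j)))"

(* A representation given by generator matrices A, B is realizable over F_s iff it is
   equivalent (over 'k) to one with all matrices over F_s; since G(p) is generated by a, b
   and products of F_s-matrices are F_s-matrices, it suffices to conjugate A and B
   simultaneously into F_s-matrices. *)
definition realizable_over_prime_field :: "'k :: field mat \<Rightarrow> 'k mat \<Rightarrow> bool" where
  "realizable_over_prime_field A B \<longleftrightarrow>
     (\<exists>P Q A' B'. similar_mat_wit A' A P Q \<and> similar_mat_wit B' B P Q \<and>
        mat_over_prime_field A' \<and> mat_over_prime_field B')"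

end

theory Submission
  imports Defs "Jordan_Normal_Form.Determinant"
begin

lemma mult_entry:
  assumes "A \<in> carrier_mat n m" "B \<in> carrier_mat m l" "i < n" "j < l"
  shows "(A * B) $$ (i,j) = (\<Sum>k<m. A $$ (i,k) * B $$ (k,j))"
  using assms by (auto simp: scalar_prod_def lessThan_atLeast0 intro!: sum.cong)

lemma frob_mult_mat:
  fixes A B :: "'k::field mat"
  assumes "CHAR('k) = s" "prime s" "A \<in> carrier_mat n m" "B \<in> carrier_mat m l"
  shows "map_mat (\<lambda>x. x^s) (A*B) = map_mat (\<lambda>x. x^s) A * map_mat (\<lambda>x. x^s) B"
proof (rule eq_matI)
  fix i j assume "i < dim_row (map_mat (\<lambda>x. x^s) A * map_mat (\<lambda>x. x^s) B)"
     "j < dim_col (map_mat (\<lambda>x. x^s) A * map_mat (\<lambda>x. x^s) B)"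
  hence ij: "i < n" "j < l" using assms by auto
  have "map_mat (\<lambda>x. x^s) (A*B) $$ (i,j) = (\<Sum>k<m. A $$ (i,k) * B $$ (k,j)) ^ s"
    using assms ij by (simp add: mult_entry[OF assms(3,4) ij])
  also have "\<dots> = (\<Sum>k<m. (A $$ (i,k) * B $$ (k,j)) ^ s)"
    by (rule freshmans_dream_sum) (use assms in auto)
  also have "\<dots> = (map_mat (\<lambda>x. x^s) A * map_mat (\<lambda>x. x^s) B) $$ (i,j)"
    by (subst mult_entry[of _ n m _ l]) (use assms ij in \<open>auto simp: power_mult_distrib\<close>)
  finally show "map_mat (\<lambda>x. x^s) (A*B) $$ (i,j) = (map_mat (\<lambda>x. x^s) A * map_mat (\<lambda>x. x^s) B) $$ (i,j)" .
qed (use assms in auto)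

lemma pf_frob:
  fixes x :: "'k::field"
  assumes "CHAR('k) = s" "prime s" "in_prime_field x"
  shows "x ^ s = x"
proof -
  obtain m where x: "x = of_nat m" using assms(3) unfolding in_prime_field_def by auto
  have "(of_nat m :: 'k) ^ s = of_nat m" for m
  proof (induction m)
    case 0 then show ?case using assms prime_gt_0_nat by (simp add: power_0_left)
  next
    case (Suc m)
    have "(of_nat (Suc m) :: 'k) ^ s = (of_nat m + 1) ^ s" by (simp add: add.commute)
    also have "\<dots> = of_nat m ^ s + 1 ^ s" by (rule freshmans_dream) (use assms in auto)
    finally show ?case using Suc by simp
  qed
  thus ?thesis using x by simp
qed

lemma frob_pf:
  fixes x :: "'k::field"
  assumes "CHAR('k) = s" "prime s" "x ^ s = x"
  shows "in_prime_field x"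
proof (rule ccontr)
  assume nx: "\<not> in_prime_field x"
  define q :: "'k poly" where "q = monom 1 s - [:0,1:]"
  have s2: "s \<ge> 2" using assms prime_ge_2_nat by auto
  have cq: "coeff q s = 1" using s2 by (simp add: q_def coeff_pCons split: nat.split)
  hence q0: "q \<noteq> 0" by auto
  have dq: "degree q \<le> s" unfolding q_def
    by (rule order.trans[OF degree_diff_le_max]) (use s2 in \<open>auto simp: degree_monom_eq\<close>)
  have roots: "poly q y = 0 \<longleftrightarrow> y ^ s = y" for y by (simp add: q_def poly_monom)
  let ?S = "insert x (of_nat ` {..<s} :: 'k set)"
  have sub: "?S \<subseteq> {y. poly q y = 0}"
    using assms by (auto simp: roots intro!: pf_frob simp: in_prime_field_def)
  have inj: "inj_on (of_nat :: nat \<Rightarrow> 'k) {..<s}"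
    by (auto simp: inj_on_def of_nat_eq_iff_cong_CHAR assms cong_def)
  have "x \<notin> of_nat ` {..<s}" using nx by (auto simp: in_prime_field_def)
  hence "s + 1 = card ?S" using inj by (simp add: card_image)
  also have "card ?S \<le> card {y. poly q y = 0}"
    by (rule card_mono[OF poly_roots_finite[OF q0] sub])
  also have "\<dots> \<le> degree q" by (rule card_poly_roots_bound[OF q0])
  finally show False using dq by simp
qed

lemma zeta_pow_mod:
  fixes z :: "'k::field"
  assumes "z ^ p = 1"
  shows "z ^ a = z ^ (a mod p)"
proof -
  have "z ^ a = (z ^ p) ^ (a div p) * z ^ (a mod p)"
    by (metis mult_div_mod_eq power_add power_mult)
  thus ?thesis using assms by simp
qed

lemma zeta_pow_eq:
  fixes z :: "'k::field"
  assumes "prim_root_of_unity p z" "p > 0"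
  shows "z ^ a = z ^ b \<longleftrightarrow> a mod p = b mod p"
proof -
  have zp: "z ^ p = 1" and nz: "\<And>k. 0 < k \<Longrightarrow> k < p \<Longrightarrow> z ^ k \<noteq> 1"
    using assms unfolding prim_root_of_unity_def by auto
  have z0: "z \<noteq> 0" using zp assms(2) by (auto simp: power_0_left)
  have key: "z ^ x \<noteq> z ^ y" if "x < y" "y < p" for x y
  proof
    assume "z ^ x = z ^ y"
    also have "z ^ y = z ^ x * z ^ (y - x)" using that by (simp flip: power_add)
    finally have "z ^ (y - x) = 1" using z0 by simp
    thus False using nz[of "y - x"] that by auto
  qed
  have "z ^ a = z ^ b \<longleftrightarrow> z ^ (a mod p) = z ^ (b mod p)"
    using zeta_pow_mod[OF zp] by metis
  also have "\<dots> \<longleftrightarrow> a mod p = b mod p"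
    using key[of "a mod p" "b mod p"] key[of "b mod p" "a mod p"] assms(2)
    by (metis linorder_neqE_nat mod_less_divisor)
  finally show ?thesis .
qed

lemma primroot_facts:
  assumes "prime p" "residue_primroot p g"
  shows "ord p g = p - 1" "coprime p g"
  using assms by (auto simp: residue_primroot_def totient_prime)

lemma gpow_inj:
  assumes "prime p" "residue_primroot p g" "i < (p - 1) div 2" "j < (p - 1) div 2"
    "g ^ (2*i) mod p = g ^ (2*j) mod p"
  shows "i = j"
proof -
  have "inj_on (\<lambda>k. g ^ k mod p) {..<ord p g}"
    by (rule inj_power_mod) (use primroot_facts[OF assms(1,2)] in auto)
  hence "inj_on (\<lambda>k. g ^ k mod p) {..<p-1}" using primroot_facts[OF assms(1,2)] by simp
  moreover have "2*i \<in> {..<p-1}" "2*j \<in> {..<p-1}" using assms(3,4) by auto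
  ultimately have "2*i = 2*j" using assms(5) by (meson inj_onD)
  thus ?thesis by simp
qed

lemma gpow_mod:
  assumes "prime p" "odd p" "residue_primroot p g"
  shows "[g ^ (2*a) = g ^ (2*(a mod ((p - 1) div 2)))] (mod p)"
proof -
  let ?n = "(p - 1) div 2"
  have n2: "2 * ?n = p - 1" using assms(2) by auto
  have "[g ^ (p - 1) = 1] (mod p)"
    using ord_divides[of g "p - 1" p] primroot_facts[OF assms(1,3)] by simp
  hence one: "[g ^ (2 * ?n) = 1] (mod p)" using n2 by simp
  have "g ^ (2*a) = g ^ (2*(a mod ?n)) * (g ^ (2 * ?n)) ^ (a div ?n)"
  proof -
    have "2*a = 2*(a mod ?n) + (2 * ?n) * (a div ?n)"
      by (metis add.commute distrib_left mult.assoc mult_div_mod_eq)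
    thus ?thesis by (metis power_add power_mult)
  qed
  also have "[\<dots> = g ^ (2*(a mod ?n)) * 1 ^ (a div ?n)] (mod p)"
    by (intro cong_mult cong_refl cong_pow one)
  finally show ?thesis by simp
qed

lemma legendre_range: "Legendre a p \<in> {-1, 0, 1}"
  by (simp add: Legendre_def)

lemma legendre_star:
  assumes "prime p" "prime s" "odd p" "odd s" "p \<noteq> s"
  shows "Legendre ((-1) ^ ((p - 1) div 2) * int p) (int s) = Legendre (int s) (int p)"
proof -
  let ?n = "(p - 1) div 2" and ?m = "(s - 1) div 2"
  have "p \<ge> 2" "s \<ge> 2" "p \<noteq> 2" "s \<noteq> 2" using assms prime_ge_2_nat by auto
  hence p2: "2 < p" and s2: "2 < s" by auto
  let ?Ls = "Legendre ((-1) ^ ?n * int p) (int s)"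
  let ?L1 = "Legendre (int p) (int s)" and ?L2 = "Legendre (int s) (int p)"
  have E1: "[?Ls = ((-1) ^ ?n * int p) ^ ?m] (mod int s)"
    using euler_criterion[OF assms(2) s2] by simp
  have E2: "[?L1 = int p ^ ?m] (mod int s)"
    using euler_criterion[OF assms(2) s2] by simp
  have QR: "?L1 * ?L2 = (-1) ^ (?n * ?m)"
    using Quadratic_Reciprocity[OF assms(1) p2 assms(2) s2 assms(5)] by simp
  have nd: "\<not> [int p = 0] (mod int s)"
  proof
    assume "[int p = 0] (mod int s)"
    hence "s dvd p" by (metis cong_0_iff int_dvd_int_iff)
    thus False using assms by (metis prime_nat_iff prime_gt_1_nat less_numeral_extra(4) primes_dvd_imp_eq)
  qed
  hence L1: "?L1 \<in> {-1, 1}" by (auto simp: Legendre_def)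
  have "((-1) ^ ?n * int p) ^ ?m = (-1) ^ (?n * ?m) * int p ^ ?m"
    by (simp add: power_mult_distrib power_mult)
  hence E1': "[?Ls = (-1) ^ (?n * ?m) * int p ^ ?m] (mod int s)" using E1 by simp
  have "[(-1) ^ (?n * ?m) * int p ^ ?m = (-1) ^ (?n * ?m) * ?L1] (mod int s)"
    by (intro cong_mult cong_refl cong_sym[OF E2])
  with E1' have "[?Ls = (-1) ^ (?n * ?m) * ?L1] (mod int s)" by (rule cong_trans)
  also have "(-1) ^ (?n * ?m) * ?L1 = ?L2"
    using L1 QR[symmetric] by auto
  finally have c: "[?Ls = ?L2] (mod int s)" .
  hence d: "int s dvd ?Ls - ?L2" by (simp add: cong_iff_dvd_diff)
  show ?thesis
  proof (rule ccontr)
    assume "?Ls \<noteq> ?L2"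
    hence "\<bar>int s\<bar> \<le> \<bar>?Ls - ?L2\<bar>" using d by (intro dvd_imp_le_int) auto
    moreover have "\<bar>?Ls - ?L2\<bar> \<le> 2"
      using legendre_range[of "(-1) ^ ?n * int p" "int s"] legendre_range[of "int s" "int p"]
      by (elim insertE emptyE) simp_all
    ultimately show False using s2 by simp
  qed
qed

lemma qr_to_gpow:
  assumes "prime p" "prime s" "p \<noteq> s" "residue_primroot p g" "QuadRes (int p) (int s)"
  shows "\<exists>k. [s = g^(2*k)] (mod p)"
proof -
  obtain y where y: "[y^2 = int s] (mod int p)" using assms(5) unfolding QuadRes_def by auto
  define y' where "y' = nat (y mod int p)"
  have p1: "p > 1" using assms(1) prime_gt_1_nat by auto
  have yy: "[int y' = y] (mod int p)" using p1 by (simp add: y'_def cong_def)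
  have "[int (y'^2) = int s] (mod int p)"
    using cong_trans[OF cong_pow[OF yy, of 2] y] by simp
  hence c: "[y'^2 = s] (mod p)" using cong_int_iff by blast
  have nd: "\<not> p dvd y'"
  proof
    assume "p dvd y'"
    hence "p dvd y'^2" by (simp add: power2_eq_square)
    hence "p dvd s" using cong_dvd_iff[OF c] by simp
    thus False using assms primes_dvd_imp_eq by blast
  qed
  have "y' < p" using p1 unfolding y'_def by (simp add: nat_less_iff)
  moreover have "y' > 0" using nd by (auto intro: Nat.gr0I)
  moreover have "coprime y' p" using prime_imp_coprime[OF assms(1) nd] by (simp add: coprime_commute)
  ultimately have "y' \<in> totatives p" by (simp add: totatives_def)
  moreover have "(\<lambda>i. g ^ i mod p) ` {..<totient p} = totatives p"
    using residue_primroot_is_generator[OF p1 assms(4)] by (simp add: bij_betw_def)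
  ultimately obtain k where k: "g ^ k mod p = y'" by (metis (no_types, lifting) imageE)
  have "[g ^ k = y'] (mod p)" using k \<open>y' < p\<close> by (simp add: cong_def)
  hence "[g ^ (2*k) = y'^2] (mod p)" using cong_pow[of "g^k" y' p 2]
    by (simp add: power_mult mult.commute)
  hence "[s = g ^ (2*k)] (mod p)" using c by (meson cong_sym cong_trans)
  thus ?thesis by blast
qed

lemma gpow_to_qr:
  assumes "prime p" "residue_primroot p g" "[g^(2*i) * s = 1] (mod p)"
  shows "QuadRes (int p) (int s)"
proof -
  define h where "h = g ^ i"
  have p2: "p \<ge> 2" using assms(1) prime_ge_2_nat by auto
  have hh: "h^2 = g^(2*i)" by (simp add: h_def power_mult mult.commute)
  have nd: "\<not> p dvd h"
  proof
    assume "p dvd h"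
    hence "p dvd g^(2*i) * s" using hh by (metis dvd_mult2 dvd_power power2_eq_square zero_less_numeral dvd_mult)
    hence "p dvd 1" using cong_dvd_iff[OF assms(3)] by simp
    thus False using assms(1) by simp
  qed
  define y where "y = h ^ (p - 2)"
  have "[h ^ (p - 1) = 1] (mod p)" by (rule fermat_theorem[OF assms(1) nd])
  moreover have "h ^ (p - 1) = y * h" using p2 unfolding y_def
    by (metis Suc_diff_Suc Suc_1 diff_Suc_1 le_eq_less_or_eq less_2_cases_iff not_less power_Suc2 numeral_2_eq_2 Suc_le_lessD)
  ultimately have yh: "[y * h = 1] (mod p)" by simp
  have "[(y * h)^2 * s = 1^2 * s] (mod p)" by (intro cong_mult cong_pow yh cong_refl)
  moreover have "(y * h)^2 * s = y^2 * (g^(2*i) * s)" by (simp add: hh[symmetric] power_mult_distrib)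
  moreover have "[y^2 * (g^(2*i) * s) = y^2 * 1] (mod p)" by (intro cong_mult cong_refl assms(3))
  ultimately have "[s = y^2] (mod p)" by (metis cong_sym cong_trans mult_1 mult_1_right power_one)
  hence "[int y ^ 2 = int s] (mod int p)" by (metis cong_int_iff cong_sym of_nat_power)
  thus ?thesis unfolding QuadRes_def by blast
qed

lemma sum_ind:
  fixes f :: "nat \<Rightarrow> 'a::semiring_1"
  assumes "c < n"
  shows "(\<Sum>k<n. (if k = c then 1 else 0) * f k) = f c"
    "(\<Sum>k<n. f k * (if k = c then 1 else 0)) = f c"
proof -
  have "(\<Sum>k<n. (if k = c then 1 else 0) * f k) = (\<Sum>k<n. if k = c then f k else 0)"
    by (rule sum.cong) auto
  thus "(\<Sum>k<n. (if k = c then 1 else 0) * f k) = f c" using assms by (simp add: sum.delta')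
  have "(\<Sum>k<n. f k * (if k = c then 1 else 0)) = (\<Sum>k<n. if k = c then f k else 0)"
    by (rule sum.cong) auto
  thus "(\<Sum>k<n. f k * (if k = c then 1 else 0)) = f c" using assms by (simp add: sum.delta')
qed

lemma modpred:
  assumes "n > 0" "k < (n::nat)"
  shows "(k = (x + n - 1) mod n) \<longleftrightarrow> ((k+1) mod n = x mod n)"
proof -
  have "(k = (x + n - 1) mod n) \<longleftrightarrow> [k = x + n - 1] (mod n)"
    using assms by (simp add: cong_def)
  also have "\<dots> \<longleftrightarrow> [k + 1 = x + n - 1 + 1] (mod n)"
    using cong_add_rcancel_nat[of k 1 "x+n-1" n] by simp
  also have "x + n - 1 + 1 = x + n" using assms by simp
  also have "[k + 1 = x + n] (mod n) \<longleftrightarrow> [k + 1 = x] (mod n)"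
    by (simp add: cong_def)
  finally show ?thesis by (simp add: cong_def)
qed

lemma vander_inv:
  fixes z :: "nat \<Rightarrow> 'k::field"
  assumes "inj_on z {..<n}"
  shows "\<exists>W. W \<in> carrier_mat n n \<and> mat n n (\<lambda>(i,j). z i ^ j) * W = 1\<^sub>m n
     \<and> W * mat n n (\<lambda>(i,j). z i ^ j) = 1\<^sub>m n"
proof -
  define V where "V = mat n n (\<lambda>(i,j). z i ^ j)"
  have Vc: "V \<in> carrier_mat n n" by (simp add: V_def)
  have "det V \<noteq> 0"
  proof
    assume "det V = 0"
    then obtain v where v: "v \<in> carrier_vec n" "v \<noteq> 0\<^sub>v n" "V *\<^sub>v v = 0\<^sub>v n"
      using det_0_iff_vec_prod_zero[OF Vc] by auto
    define q where "q = (\<Sum>j<n. monom (v $ j) j)"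
    have cq: "coeff q j = (if j < n then v $ j else 0)" for j
      by (simp add: q_def coeff_sum coeff_monom sum.delta' lessThan_def)
    obtain j where j: "j < n" "v $ j \<noteq> 0" using v(1,2) by (metis eq_vecI carrier_vecD index_zero_vec)
    hence q0: "q \<noteq> 0" using cq[of j] by auto
    have n0: "n > 0" using j by auto
    have dq: "degree q \<le> n - 1" by (rule degree_le) (use cq in auto)
    have roots: "poly q (z i) = 0" if "i < n" for i
    proof -
      have "(V *\<^sub>v v) $ i = 0" using v(3) that by simp
      moreover have "(V *\<^sub>v v) $ i = (\<Sum>j<n. z i ^ j * v $ j)"
        using that v(1) by (simp add: V_def scalar_prod_def lessThan_atLeast0)
      moreover have "poly q (z i) = (\<Sum>j<n. v $ j * z i ^ j)"
        by (simp add: q_def poly_sum poly_monom)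
      ultimately show ?thesis by (simp add: mult.commute)
    qed
    have "n = card (z ` {..<n})" using assms by (simp add: card_image)
    also have "\<dots> \<le> card {x. poly q x = 0}"
      by (rule card_mono[OF poly_roots_finite[OF q0]]) (use roots in auto)
    also have "\<dots> \<le> degree q" by (rule card_poly_roots_bound[OF q0])
    finally show False using dq n0 by simp
  qed
  hence "V \<in> Units (ring_mat TYPE('k) n ())" by (rule det_non_zero_imp_unit[OF Vc])
  then obtain W where "W \<in> carrier_mat n n" "W * V = 1\<^sub>m n" "V * W = 1\<^sub>m n"
    unfolding Units_def ring_mat_def by auto
  thus ?thesis unfolding V_def by blast
qed

lemma pf_mat_iff:
  fixes M :: "'k::field mat"
  assumes "CHAR('k) = s" "prime s"
  shows "mat_over_prime_field M \<longleftrightarrow> map_mat (\<lambda>x. x^s) M = M"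
proof
  assume "mat_over_prime_field M"
  thus "map_mat (\<lambda>x. x^s) M = M"
    unfolding mat_over_prime_field_def using pf_frob[OF assms] by (intro eq_matI) auto
next
  assume e: "map_mat (\<lambda>x. x^s) M = M"
  show "mat_over_prime_field M" unfolding mat_over_prime_field_def
  proof (intro allI impI)
    fix i j assume "i < dim_row M" "j < dim_col M"
    hence "(M $$ (i,j)) ^ s = M $$ (i,j)" using arg_cong[OF e, of "\<lambda>X. X $$ (i,j)"] by simp
    thus "in_prime_field (M $$ (i,j))" by (rule frob_pf[OF assms])
  qed
qed

lemma frob_one:
  assumes "prime s"
  shows "map_mat (\<lambda>x. (x::'k::field)^s) (1\<^sub>m n) = 1\<^sub>m n"
  using assms prime_gt_0_nat by (intro eq_matI) (auto simp: power_0_left)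

lemma diag_left:
  assumes "D \<in> carrier_mat n n" "\<forall>i<n. \<forall>j<n. D $$ (i,j) = (if i = j then f i else 0)"
    "X \<in> carrier_mat n m" "i < n" "j < m"
  shows "(D * X) $$ (i,j) = f i * X $$ (i,j)"
proof -
  have "(D * X) $$ (i,j) = (\<Sum>k<n. D $$ (i,k) * X $$ (k,j))" by (rule mult_entry) (use assms in auto)
  also have "\<dots> = (\<Sum>k<n. if k = i then f i * X $$ (k,j) else 0)"
    by (rule sum.cong) (use assms in auto)
  finally show ?thesis using assms by (simp add: sum.delta')
qed

lemma diag_right:
  fixes D :: "'a::semiring_1 mat"
  assumes "D \<in> carrier_mat m m" "\<forall>i<m. \<forall>j<m. D $$ (i,j) = (if i = j then f i else 0)"
    "X \<in> carrier_mat n m" "i < n" "j < m"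
  shows "(X * D) $$ (i,j) = X $$ (i,j) * f j"
proof -
  have "(X * D) $$ (i,j) = (\<Sum>k<m. X $$ (i,k) * D $$ (k,j))" by (rule mult_entry) (use assms in auto)
  also have "\<dots> = (\<Sum>k<m. if k = j then X $$ (i,k) * f j else 0)"
    by (rule sum.cong) (use assms in auto)
  finally show ?thesis using assms by (simp add: sum.delta')
qed

lemma eig_frob:
  fixes D A' P Q :: "'k::field mat"
  assumes ch: "CHAR('k) = s" "prime s" and Dc: "D \<in> carrier_mat n n"
    and Dd: "\<forall>i<n. \<forall>j<n. D $$ (i,j) = (if i = j then d i else 0)"
    and n0: "0 < n" and sim: "similar_mat_wit A' D P Q" and pf: "mat_over_prime_field A'"
  shows "\<exists>i<n. d i ^ s = d 0"
proof -
  let ?F = "map_mat (\<lambda>x::'k. x^s)"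
  have s0: "s > 0" using ch prime_gt_0_nat by auto
  have dimA: "dim_row A' = n" using similar_mat_witD(5)[OF refl sim] Dc by auto
  note W = similar_mat_witD[OF dimA[symmetric] sim]
  have Ac: "A' \<in> carrier_mat n n" and Pc: "P \<in> carrier_mat n n" and Qc: "Q \<in> carrier_mat n n"
    and PQ: "P * Q = 1\<^sub>m n" and QP: "Q * P = 1\<^sub>m n" and AE: "A' = P * D * Q"
    using W by auto
  have as: "\<And>X Y Z. X \<in> carrier_mat n n \<Longrightarrow> Y \<in> carrier_mat n n \<Longrightarrow> Z \<in> carrier_mat n n
     \<Longrightarrow> X * Y * Z = X * (Y * Z)" by simp
  have cm: "\<And>X Y. X \<in> carrier_mat n n \<Longrightarrow> Y \<in> carrier_mat n n \<Longrightarrow> X * Y \<in> carrier_mat n n"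
    by simp
  have FAc: "?F A' = A'" using pf pf_mat_iff[OF ch] by auto
  have FPc: "?F P \<in> carrier_mat n n" and FQc: "?F Q \<in> carrier_mat n n" and FDc: "?F D \<in> carrier_mat n n"
    using Pc Qc Dc by auto
  have FPQ: "?F P * ?F Q = 1\<^sub>m n" unfolding frob_mult_mat[OF ch Pc Qc, symmetric] PQ frob_one[OF ch(2)] ..
  have FQP: "?F Q * ?F P = 1\<^sub>m n" unfolding frob_mult_mat[OF ch Qc Pc, symmetric] QP frob_one[OF ch(2)] ..
  have e1: "?F P * ?F D * ?F Q = P * D * Q"
  proof -
    have "?F P * ?F D * ?F Q = ?F (P * D * Q)"
      unfolding frob_mult_mat[OF ch mult_carrier_mat[OF Pc Dc] Qc] frob_mult_mat[OF ch Pc Dc] ..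
    also have "\<dots> = P * D * Q" using FAc AE by simp
    finally show ?thesis .
  qed
  define M where "M = ?F Q * P"
  define M' where "M' = Q * ?F P"
  have Mc: "M \<in> carrier_mat n n" "M' \<in> carrier_mat n n" using Pc Qc by (auto simp: M_def M'_def)
  have MM: "M' * M = 1\<^sub>m n"
  proof -
    have "M' * M = Q * ((?F P * ?F Q) * P)" unfolding M_def M'_def using Pc Qc FPc FQc by (simp add: as cm)
    also have "\<dots> = 1\<^sub>m n" using FPQ QP Pc by (simp add: as cm)
    finally show ?thesis .
  qed
  have comm: "?F D * M = M * D"
  proof -
    have "?F D * M = (?F Q * ?F P) * (?F D * M)" using FQP FDc Mc by (simp add: as cm)
    also have "\<dots> = ?F Q * (?F P * ?F D * ?F Q) * P" unfolding M_def using FPc FQc FDc Pc by (simp add: as cm)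
    also have "\<dots> = ?F Q * (P * D * Q) * P" by (subst e1) (rule refl)
    also have "\<dots> = M * D * (Q * P)" unfolding M_def using FQc Pc Qc Dc by (simp add: as cm)
    also have "\<dots> = M * D" using QP Mc Dc by (simp add: as cm)
    finally show ?thesis .
  qed
  have FDd: "\<forall>i<n. \<forall>j<n. ?F D $$ (i,j) = (if i = j then d i ^ s else 0)"
    using Dd Dc s0 by (auto simp: power_0_left)
  show ?thesis
  proof (rule ccontr)
    assume "\<not> ?thesis"
    hence ne: "d i ^ s \<noteq> d 0" if "i < n" for i using that by auto
    have col0: "M $$ (i,0) = 0" if "i < n" for i
    proof -
      have "(?F D * M) $$ (i,0) = (M * D) $$ (i,0)" using comm by simp
      hence "d i ^ s * M $$ (i,0) = M $$ (i,0) * d 0"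
        using diag_left[OF FDc FDd Mc(1) that n0] diag_right[OF Dc Dd Mc(1) that n0] by simp
      thus ?thesis using ne[OF that] by (simp add: mult.commute)
    qed
    have "(M' * M) $$ (0,0) = (\<Sum>k<n. M' $$ (0,k) * M $$ (k,0))"
      by (rule mult_entry) (use Mc n0 in auto)
    also have "\<dots> = 0" using col0 by simp
    finally show False using MM n0 by simp
  qed
qed

lemma realize:
  fixes z :: "nat \<Rightarrow> 'k::field"
  assumes ch: "CHAR('k) = s" "prime s" and n0: "0 < n" and inj: "inj_on z {..<n}"
    and zs: "\<forall>i<n. z i ^ s = z ((i + k0) mod n)"
  shows "realizable_over_prime_field (mat n n (\<lambda>(i,j). if i = j then z i else 0))
           (mat n n (\<lambda>(i,j). if i = (j + 1) mod n then 1 else 0))"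
proof -
  let ?F = "map_mat (\<lambda>x::'k. x^s)"
  define A where "A = mat n n (\<lambda>(i,j). if i = j then z i else (0::'k))"
  define B where "B = mat n n (\<lambda>(i,j). if i = (j + 1) mod n then 1 else (0::'k))"
  define V where "V = mat n n (\<lambda>(i,j). z i ^ j)"
  define Pi where "Pi = mat n n (\<lambda>(i,k). if k = (i + k0) mod n then 1 else (0::'k))"
  have s0: "s > 0" using ch prime_gt_0_nat by auto
  obtain W where Wc: "W \<in> carrier_mat n n" and VW: "V * W = 1\<^sub>m n" and WV: "W * V = 1\<^sub>m n"
    using vander_inv[OF inj] unfolding V_def by blast
  have Ac: "A \<in> carrier_mat n n" and Bc: "B \<in> carrier_mat n n" and Vc: "V \<in> carrier_mat n n"
    and Pic: "Pi \<in> carrier_mat n n" by (auto simp: A_def B_def V_def Pi_def)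
  have FAc: "?F A \<in> carrier_mat n n" and FWc: "?F W \<in> carrier_mat n n" using Ac Wc by auto
  have as: "\<And>X Y Z. X \<in> carrier_mat n n \<Longrightarrow> Y \<in> carrier_mat n n \<Longrightarrow> Z \<in> carrier_mat n n
     \<Longrightarrow> X * Y * Z = X * (Y * Z)" by simp
  have cm: "\<And>X Y. X \<in> carrier_mat n n \<Longrightarrow> Y \<in> carrier_mat n n \<Longrightarrow> X * Y \<in> carrier_mat n n"
    by simp
  have smod: "(i + k0) mod n < n" for i using n0 by simp
  
  have FV: "?F V = Pi * V"
  proof (rule eq_matI)
    fix i j assume ij: "i < dim_row (Pi * V)" "j < dim_col (Pi * V)"
    hence ij': "i < n" "j < n" using Pic Vc by auto
    have "(Pi * V) $$ (i,j) = (\<Sum>k<n. Pi $$ (i,k) * V $$ (k,j))" by (rule mult_entry[OF Pic Vc ij'])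
    also have "\<dots> = (\<Sum>k<n. (if k = (i + k0) mod n then 1 else 0) * z k ^ j)"
      by (rule sum.cong) (use ij' in \<open>auto simp: Pi_def V_def\<close>)
    also have "\<dots> = z ((i + k0) mod n) ^ j" by (rule sum_ind(1)[OF smod])
    also have "\<dots> = (z i ^ s) ^ j" using zs ij' by simp
    also have "\<dots> = ?F V $$ (i,j)" using ij' by (simp add: V_def flip: power_mult) (simp add: mult.commute)
    finally show "?F V $$ (i,j) = (Pi * V) $$ (i,j)" by simp
  qed (use Pic Vc in auto)
  have Ad: "\<forall>i<n. \<forall>j<n. A $$ (i,j) = (if i = j then z i else 0)" by (simp add: A_def)
  have FAd: "\<forall>i<n. \<forall>j<n. ?F A $$ (i,j) = (if i = j then z i ^ s else 0)"
    using s0 by (simp add: A_def power_0_left)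
  have FAPi: "?F A * Pi = Pi * A"
  proof (rule eq_matI)
    fix i k assume ik: "i < dim_row (Pi * A)" "k < dim_col (Pi * A)"
    hence ik': "i < n" "k < n" using Pic Ac by auto
    have "(?F A * Pi) $$ (i,k) = z i ^ s * Pi $$ (i,k)" by (rule diag_left[OF FAc FAd Pic ik'])
    also have "\<dots> = Pi $$ (i,k) * z k" using ik' zs by (auto simp: Pi_def)
    also have "\<dots> = (Pi * A) $$ (i,k)" by (rule diag_right[OF Ac Ad Pic ik', symmetric])
    finally show "(?F A * Pi) $$ (i,k) = (Pi * A) $$ (i,k)" .
  qed (use Pic Ac in auto)
  have FB: "?F B = B" using s0 by (intro eq_matI) (auto simp: B_def power_0_left)
  have BPi: "B * Pi = Pi * B"
  proof (rule eq_matI)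
    fix i k assume ik: "i < dim_row (Pi * B)" "k < dim_col (Pi * B)"
    hence ik': "i < n" "k < n" using Pic Bc by auto
    define pr where "pr = (i + n - 1) mod n"
    have prl: "pr < n" using n0 by (simp add: pr_def)
    have "(B * Pi) $$ (i,k) = (\<Sum>l<n. B $$ (i,l) * Pi $$ (l,k))" by (rule mult_entry[OF Bc Pic ik'])
    also have "\<dots> = (\<Sum>l<n. (if l = pr then 1 else 0) * (if k = (l + k0) mod n then 1 else 0))"
    proof (rule sum.cong)
      fix l assume "l \<in> {..<n}"
      hence l: "l < n" by simp
      have "(i = (l + 1) mod n) \<longleftrightarrow> l = pr"
        using modpred[OF n0 l, of i] ik' unfolding pr_def by auto
      thus "B $$ (i,l) * Pi $$ (l,k) = (if l = pr then 1 else 0) * (if k = (l + k0) mod n then 1 else 0)"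
        using l ik' by (simp add: B_def Pi_def)
    qed simp
    also have "\<dots> = (if k = (pr + k0) mod n then 1 else 0)" by (rule sum_ind(1)[OF prl])
    also have "\<dots> = (if (i + k0) mod n = (k + 1) mod n then 1 else 0)"
    proof -
      have "(pr + k0) mod n = ((i + n - 1) + k0) mod n" unfolding pr_def by (rule mod_add_left_eq)
      also have "(i + n - 1) + k0 = i + k0 + n - 1" using n0 by simp
      finally have "(pr + k0) mod n = (i + k0 + n - 1) mod n" .
      hence "k = (pr + k0) mod n \<longleftrightarrow> (k + 1) mod n = (i + k0) mod n"
        using modpred[OF n0 ik'(2), of "i + k0"] by simp
      thus ?thesis by auto
    qed
    also have "\<dots> = (\<Sum>l<n. (if l = (i + k0) mod n then 1 else 0) * (if l = (k + 1) mod n then 1 else 0))"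
      by (rule sum_ind(1)[OF smod, symmetric])
    also have "\<dots> = (\<Sum>l<n. Pi $$ (i,l) * B $$ (l,k))"
      by (rule sum.cong) (use ik' in \<open>auto simp: B_def Pi_def\<close>)
    also have "\<dots> = (Pi * B) $$ (i,k)" by (rule mult_entry[OF Pic Bc ik', symmetric])
    finally show "(B * Pi) $$ (i,k) = (Pi * B) $$ (i,k)" .
  qed (use Pic Bc in auto)
  
  have FWPiV: "?F W * (Pi * V) = 1\<^sub>m n"
    using frob_mult_mat[OF ch Wc Vc] WV frob_one[OF ch(2)] FV by metis
  have FWPi: "?F W * Pi = W"
  proof -
    have "?F W * Pi = ?F W * Pi * (V * W)" using VW FWc Pic by (simp add: as cm)
    also have "\<dots> = (?F W * (Pi * V)) * W" using FWc Pic Vc Wc by (simp add: as cm)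
    also have "\<dots> = W" using FWPiV Wc by simp
    finally show ?thesis .
  qed
  define A' where "A' = W * A * V"
  define B' where "B' = W * B * V"
  have FA': "?F A' = A'"
  proof -
    have "?F A' = ?F W * ?F A * ?F V"
      unfolding A'_def frob_mult_mat[OF ch mult_carrier_mat[OF Wc Ac] Vc] frob_mult_mat[OF ch Wc Ac] ..
    also have "\<dots> = ?F W * (?F A * Pi) * V" using FV FWc FAc Pic Vc by (simp add: as cm)
    also have "\<dots> = (?F W * Pi) * A * V" using FAPi FWc FAc Pic Vc Ac by (simp add: as cm)
    also have "\<dots> = A'" using FWPi by (simp add: A'_def)
    finally show ?thesis .
  qed
  have FB': "?F B' = B'"
  proof -
    have "?F B' = ?F W * ?F B * ?F V"
      unfolding B'_def frob_mult_mat[OF ch mult_carrier_mat[OF Wc Bc] Vc] frob_mult_mat[OF ch Wc Bc] ..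
    also have "\<dots> = ?F W * (B * Pi) * V" using FV FB FWc Bc Pic Vc by (simp add: as cm)
    also have "\<dots> = (?F W * Pi) * B * V" using BPi FWc Bc Pic Vc by (simp add: as cm)
    also have "\<dots> = B'" using FWPi by (simp add: B'_def)
    finally show ?thesis .
  qed
  have dA': "dim_row A' = n" "dim_row B' = n" using Wc by (auto simp: A'_def B'_def)
  have "similar_mat_wit A' A W V" "similar_mat_wit B' B W V"
    unfolding similar_mat_wit_def Let_def dA' using Wc Vc Ac Bc WV VW
    by (auto simp: A'_def B'_def)
  moreover have "mat_over_prime_field A'" "mat_over_prime_field B'"
    using FA' FB' pf_mat_iff[OF ch] by auto
  ultimately show ?thesis unfolding realizable_over_prime_field_def A_def[symmetric] B_def[symmetric]
    by blast
qed

theorem theorem3p3: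
  fixes p s g :: nat and \<zeta> :: "'k :: alg_closed_field"
  assumes "prime p" and "prime s" and "odd p" and "odd s" and "p \<noteq> s"
    and "residue_primroot p g"
    and "is_alg_closure_of_Fp TYPE('k) s"
    and "prim_root_of_unity p \<zeta>"
  shows "realizable_over_prime_field (ind_rep_a p g \<zeta>) (ind_rep_b p :: 'k mat)
     \<longleftrightarrow> Legendre ((-1) ^ ((p - 1) div 2) * int p) (int s) = 1"
proof -
  define n where "n = (p - 1) div 2"
  define z where "z i = \<zeta> ^ (g ^ (2 * i))" for i
  have ch: "CHAR('k) = s" "prime s" using assms(2,7) by (auto simp: is_alg_closure_of_Fp_def)
  have p2: "p > 2" using assms(1,3) prime_ge_2_nat[OF assms(1)] by (cases "p = 2") auto
  hence n0: "n > 0" and p0: "p > 0" by (auto simp: n_def)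
  have Aeq: "ind_rep_a p g \<zeta> = mat n n (\<lambda>(i,j). if i = j then z i else 0)"
    unfolding ind_rep_a_def n_def z_def by simp
  have Beq: "(ind_rep_b p :: 'k mat) = mat n n (\<lambda>(i,j). if i = (j + 1) mod n then 1 else 0)"
    by (simp add: ind_rep_b_def n_def)
  have zpow: "z i ^ s = \<zeta> ^ (g ^ (2 * i) * s)" for i by (simp add: z_def power_mult)
  have inj: "inj_on z {..<n}"
  proof (rule inj_onI)
    fix i j assume ij: "i \<in> {..<n}" "j \<in> {..<n}" "z i = z j"
    hence "g ^ (2*i) mod p = g ^ (2*j) mod p" using zeta_pow_eq[OF assms(8) p0] by (simp add: z_def)
    thus "i = j" using gpow_inj[OF assms(1,6)] ij by (auto simp: n_def)
  qed
  have sp: "\<not> [int s = 0] (mod int p)"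
  proof
    assume "[int s = 0] (mod int p)"
    hence "p dvd s" by (metis cong_0_iff int_dvd_int_iff)
    thus False using assms(1,2,5) primes_dvd_imp_eq by blast
  qed
  have L: "Legendre ((-1) ^ ((p - 1) div 2) * int p) (int s) = 1 \<longleftrightarrow> QuadRes (int p) (int s)"
    using legendre_star[OF assms(1-5)] sp by (simp add: Legendre_def)
  show ?thesis unfolding L
  proof
    assume "realizable_over_prime_field (ind_rep_a p g \<zeta>) (ind_rep_b p :: 'k mat)"
    then obtain P Q A' B' where sim: "similar_mat_wit A' (ind_rep_a p g \<zeta>) P Q"
      and pf: "mat_over_prime_field A'" unfolding realizable_over_prime_field_def by blast
    have "\<exists>i<n. z i ^ s = z 0"
      by (rule eig_frob[OF ch _ _ n0 sim pf]) (auto simp: Aeq)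
    then obtain i where "z i ^ s = z 0" by blast
    hence "\<zeta> ^ (g ^ (2 * i) * s) = \<zeta> ^ 1" unfolding zpow by (simp add: z_def)
    hence "(g ^ (2 * i) * s) mod p = 1 mod p" using zeta_pow_eq[OF assms(8) p0] by blast
    hence "[g ^ (2 * i) * s = 1] (mod p)" by (simp add: cong_def)
    thus "QuadRes (int p) (int s)" by (rule gpow_to_qr[OF assms(1,6)])
  next
    assume "QuadRes (int p) (int s)"
    then obtain k where k: "[s = g^(2*k)] (mod p)" using qr_to_gpow[OF assms(1,2,5,6)] by blast
    have zs: "\<forall>i<n. z i ^ s = z ((i + k) mod n)"
    proof (intro allI impI)
      fix i assume "i < n"
      have "[g ^ (2 * i) * s = g ^ (2 * i) * g ^ (2 * k)] (mod p)" by (intro cong_mult cong_refl k)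
      also have "g ^ (2 * i) * g ^ (2 * k) = g ^ (2 * (i + k))" by (simp add: power_add distrib_left)
      also have "[g ^ (2 * (i + k)) = g ^ (2 * ((i + k) mod n))] (mod p)"
        unfolding n_def by (rule gpow_mod[OF assms(1,3,6)])
      finally have "(g ^ (2 * i) * s) mod p = g ^ (2 * ((i + k) mod n)) mod p" by (simp add: cong_def)
      hence "\<zeta> ^ (g ^ (2 * i) * s) = \<zeta> ^ (g ^ (2 * ((i + k) mod n)))"
        using zeta_pow_eq[OF assms(8) p0] by blast
      thus "z i ^ s = z ((i + k) mod n)" unfolding zpow by (simp add: z_def)
    qed
    show "realizable_over_prime_field (ind_rep_a p g \<zeta>) (ind_rep_b p :: 'k mat)"
      unfolding Aeq Beq by (rule realize[OF ch n0 inj zs])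
  qed
qed

end
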